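(* Let $H$ be a separable Hilbert space and $\Psi:\Omega\to B(H)$ a strongly measurable random operator taking values in selfadjoint (orthogonal) projections, such that for some $0<C<1$, $\mathbb E\|\Psi x\|^2\ge C\|x\|^2$ for all $x\in H$. Let $\Psi_1,\Psi_2,\dots$ be i.i.d. copies of $\Psi$ and $T_k=\Psi_k(I-\Psi_{k-1})\cdots(I-\Psi_1)$. Then for every $x\in H$: $\lim_{n\to\infty}\mathbb E\|x-\sum_{k=1}^nT_kx\|^2=0$; $x=\lim_{n\to\infty}\sum_{k=1}^nT_kx$ almost surely; and \[ \lim_{n\to\infty}\mathbb E\Big[\sum_{k=1}^{n}\|T_kx\|^{2}\Big]=\|x\|^{2}, \] so $\{T_n\}_{n\in\mathbb N}$ forms a random operator-valued Parseval frame.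
   Context: A random operator $\Psi:\Omega\to B(H)$ on a probability space $(\Omega,\mathscr F,\mathbb P)$ is measurable in the strong operator sense: for each $x\in H$, $\omega\mapsto\Psi(\omega)x$ is measurable. $\mathbb E\|\Psi x\|^2=\int_\Omega\|\Psi(\omega)x\|^2d\mathbb P(\omega)$. *)

theory Defs
  imports "HOL-Probability.Probability"
begin

definition separable_space :: "'a::topological_space itself \<Rightarrow> bool" where
  "separable_space _ \<longleftrightarrow> (\<exists>D::'a set. countable D \<and> closure D = UNIV)"

definition is_orth_proj :: "('h::real_inner \<Rightarrow>\<^sub>L 'h) \<Rightarrow> bool" where
  "is_orth_proj P \<longleftrightarrow> P o\<^sub>L P = P \<and> (\<forall>x y. inner (P x) y = inner x (P y))"

definition strongly_measurable ::
  "'w measure \<Rightarrow> ('w \<Rightarrow> ('h::real_normed_vector \<Rightarrow>\<^sub>L 'h)) \<Rightarrow> bool" where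
  "strongly_measurable M \<Psi> \<longleftrightarrow> (\<forall>x. (\<lambda>\<omega>. \<Psi> \<omega> x) \<in> borel_measurable M)"

text \<open>The sigma-algebra on B(H) generated by the evaluation maps P \<mapsto> P x
  (the strong-operator Borel structure); used to express independence and
  identical distribution of random operators.\<close>
definition strong_op_measure :: "('h::real_normed_vector \<Rightarrow>\<^sub>L 'h) measure" where
  "strong_op_measure = sigma UNIV {(\<lambda>P. blinfun_apply P x) -` B | x B. B \<in> sets borel}"

text \<open>R k = (I - \<Psi>_k) \<dots> (I - \<Psi>_1), with R 0 = I (indices start at 1).\<close>
fun rem_prod :: "(nat \<Rightarrow> 'w \<Rightarrow> ('h::real_normed_vector \<Rightarrow>\<^sub>L 'h)) \<Rightarrow> nat \<Rightarrow> 'w \<Rightarrow> ('h \<Rightarrow>\<^sub>L 'h)" where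
  "rem_prod \<Psi>s 0 \<omega> = id_blinfun"
| "rem_prod \<Psi>s (Suc k) \<omega> = (id_blinfun - \<Psi>s (Suc k) \<omega>) o\<^sub>L rem_prod \<Psi>s k \<omega>"

text \<open>T_k = \<Psi>_k (I - \<Psi>_{k-1}) \<dots> (I - \<Psi>_1) for k \<ge> 1 (T_0 is unused, set to 0).\<close>
fun T_op :: "(nat \<Rightarrow> 'w \<Rightarrow> ('h::real_normed_vector \<Rightarrow>\<^sub>L 'h)) \<Rightarrow> nat \<Rightarrow> 'w \<Rightarrow> ('h \<Rightarrow>\<^sub>L 'h)" where
  "T_op \<Psi>s 0 \<omega> = 0"
| "T_op \<Psi>s (Suc k) \<omega> = \<Psi>s (Suc k) \<omega> o\<^sub>L rem_prod \<Psi>s k \<omega>"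

end

theory Submission
  imports Defs
begin

lemma meas_comp_sep:
  fixes G :: "'a \<Rightarrow> 'h::real_normed_vector \<Rightarrow> 'b::metric_space"
  assumes sep: "separable_space TYPE('h)"
  and Gm: "\<And>v. (\<lambda>a. G a v) \<in> borel_measurable N"
  and Gc: "\<And>a v. isCont (G a) v"
  and Y: "Y \<in> borel_measurable N"
  shows "(\<lambda>a. G a (Y a)) \<in> borel_measurable N"
proof -
  obtain D :: "'h set" where D: "countable D" "closure D = UNIV"
    using sep unfolding separable_space_def by blast
  have Dne: "D \<noteq> {}" using D by auto
  define d where "d = from_nat_into D"
  have dD: "range d = D" unfolding d_def using D Dne by (simp add: range_from_nat_into)
  have approx: "\<exists>j. dist y (d j) < e" if e0: "e > 0" for y e
  proof -
    have "y \<in> closure D" using D by auto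
    then obtain z where "z \<in> D" "dist z y < e" using closure_approachable e0 by blast
    then obtain j where "z = d j" using dD by blast
    then show ?thesis using \<open>dist z y < e\<close> by (metis dist_commute)
  qed
  define idx where "idx m a = (LEAST j. dist (Y a) (d j) < 1 / Suc m)" for m a
  have dm[measurable]: "(\<lambda>a. dist (Y a) (d j)) \<in> borel_measurable N" for j
    by (rule borel_measurable_continuous_on[OF _ Y]) (intro continuous_intros)
  have idxm: "idx m \<in> measurable N (count_space UNIV)" for m
    unfolding idx_def by measurable
  have Zm: "(\<lambda>a. G a (d (idx m a))) \<in> borel_measurable N" for m
    by (rule measurable_compose_countable[where f="\<lambda>j a. G a (d j)", OF Gm idxm])
  show ?thesis
  proof (rule borel_measurable_LIMSEQ_metric[OF Zm])
    fix a assume "a \<in> space N"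
    have "dist (Y a) (d (idx m a)) < 1 / Suc m" for m
      unfolding idx_def by (rule LeastI_ex) (rule approx, simp)
    then have b: "dist (d (idx m a)) (Y a) \<le> 1 / real (Suc m)" for m
      by (simp add: dist_commute less_imp_le)
    have l: "(\<lambda>m. 1 / real (Suc m)) \<longlonglongrightarrow> 0"
      using LIMSEQ_Suc[OF lim_inverse_n'] by simp
    have "(\<lambda>m. dist (d (idx m a)) (Y a)) \<longlonglongrightarrow> 0"
      by (rule tendsto_sandwich[OF _ _ tendsto_const l]) (use b in \<open>auto intro!: always_eventually\<close>)
    then have "(\<lambda>m. d (idx m a)) \<longlonglongrightarrow> Y a"
      using tendsto_dist_iff by blast
    then show "(\<lambda>m. G a (d (idx m a))) \<longlonglongrightarrow> G a (Y a)"
      using Gc isCont_tendsto_compose by blast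
  qed
qed


lemma som_eval[measurable]: "(\<lambda>P. blinfun_apply P x) \<in> borel_measurable strong_op_measure"
proof (rule measurableI)
  fix A :: "'a set" assume "A \<in> sets borel"
  then have "(\<lambda>P. blinfun_apply P x) -` A \<in> sigma_sets UNIV {(\<lambda>P. blinfun_apply P x) -` B | x B. B \<in> sets borel}"
    by (intro sigma_sets.Basic) blast
  then show "(\<lambda>P. blinfun_apply P x) -` A \<inter> space strong_op_measure \<in> sets strong_op_measure"
    unfolding strong_op_measure_def by (simp add: sets_measure_of)
qed simp

lemma sm_meas:
  fixes F :: "'a \<Rightarrow> ('h::real_normed_vector \<Rightarrow>\<^sub>L 'h)"
  assumes "strongly_measurable N F"
  shows "F \<in> measurable N strong_op_measure"
  unfolding strong_op_measure_def
proof (rule measurable_measure_of)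
  fix A assume "A \<in> {(\<lambda>P::'h \<Rightarrow>\<^sub>L 'h. blinfun_apply P x) -` B |x B. B \<in> sets (borel :: 'h measure)}"
  then obtain x :: 'h and B where A: "A = (\<lambda>P. blinfun_apply P x) -` B" "B \<in> sets (borel :: 'h measure)" by blast
  have "(\<lambda>a. F a x) \<in> borel_measurable N" using assms unfolding strongly_measurable_def by blast
  then have "(\<lambda>a. F a x) -` B \<inter> space N \<in> sets N" using A(2) by (rule measurable_sets)
  then show "F -` A \<inter> space N \<in> sets N" using A(1) by (simp add: vimage_def)
qed auto

lemma rem_prod_cong:
  assumes "\<And>i. i \<in> {1..j} \<Longrightarrow> A i u = B i v"
  shows "rem_prod A j u = rem_prod B j v"
  using assms by (induction j) auto

lemma proj_pythag:
  fixes P :: "'h::real_inner \<Rightarrow>\<^sub>L 'h"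
  assumes "is_orth_proj P"
  shows "(norm (P y))\<^sup>2 + (norm (y - P y))\<^sup>2 = (norm y)\<^sup>2"
proof -
  have PP: "P (P y) = P y" using assms unfolding is_orth_proj_def
    by (metis blinfun_apply_blinfun_compose)
  have "inner (P y) (P y) = inner y (P y)"
    using assms PP unfolding is_orth_proj_def by metis
  then have o: "inner (P y) (y - P y) = 0"
    by (simp add: inner_diff_right inner_commute)
  have "y = P y + (y - P y)" by simp
  then have "(norm y)\<^sup>2 = (norm (P y + (y - P y)))\<^sup>2" by simp
  also have "\<dots> = (norm (P y))\<^sup>2 + (norm (y - P y))\<^sup>2"
    using o by (simp only: power2_norm_eq_inner inner_add_left inner_add_right inner_commute)
  finally show ?thesis by simp
qed

lemma isCont_blinfun[continuous_intros]: "isCont (blinfun_apply F) v"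
  by (simp add: linear_continuous_at blinfun.bounded_linear_right)


definition Gp :: "nat \<Rightarrow> 'h::real_normed_vector \<Rightarrow> (nat \<Rightarrow> ('h \<Rightarrow>\<^sub>L 'h)) \<Rightarrow> 'h" where
  "Gp j x p = rem_prod (\<lambda>i _. p i) j () x"

locale rsetting = prob_space M for M :: "'w measure" +
  fixes \<Psi> :: "'w \<Rightarrow> ('h::{real_inner, complete_space} \<Rightarrow>\<^sub>L 'h)"
    and \<Psi>s :: "nat \<Rightarrow> 'w \<Rightarrow> ('h \<Rightarrow>\<^sub>L 'h)"
    and C :: real
  assumes sep: "separable_space TYPE('h)"
    and smP: "strongly_measurable M \<Psi>"
    and proj: "\<forall>\<omega>\<in>space M. is_orth_proj (\<Psi> \<omega>)"
    and C0: "0 < C" and C1: "C < 1"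
    and EC: "\<forall>x. (\<integral>\<omega>. (norm (\<Psi> \<omega> x))\<^sup>2 \<partial>M) \<ge> C * (norm x)\<^sup>2"
    and sms: "\<forall>k\<ge>1. strongly_measurable M (\<Psi>s k)"
    and ind: "indep_vars (\<lambda>_. strong_op_measure) \<Psi>s {1..}"
    and dis: "\<forall>k\<ge>1. distr M strong_op_measure (\<Psi>s k) = distr M strong_op_measure \<Psi>"
begin

lemma Rm: "(\<lambda>\<omega>. rem_prod \<Psi>s j \<omega> x) \<in> borel_measurable M"
proof (induction j)
  case 0 then show ?case by simp
next
  case (Suc j)
  have "(\<lambda>\<omega>. (\<lambda>a v. v - \<Psi>s (Suc j) a v) \<omega> (rem_prod \<Psi>s j \<omega> x)) \<in> borel_measurable M"
  proof (rule meas_comp_sep[OF sep _ _ Suc])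
    fix v
    have "(\<lambda>a. \<Psi>s (Suc j) a v) \<in> borel_measurable M" using sms unfolding strongly_measurable_def by auto
    then show "(\<lambda>a. v - \<Psi>s (Suc j) a v) \<in> borel_measurable M"
      by (rule borel_measurable_continuous_on[rotated]) (intro continuous_intros)
  next
    fix a v show "isCont (\<lambda>v. v - \<Psi>s (Suc j) a v) v" by (intro continuous_intros)
  qed
  then show ?case by (simp add: blinfun.diff_left)
qed


lemma Gp_meas: "j \<le> n \<Longrightarrow> Gp j (x::'h) \<in> borel_measurable (PiM {1..n} (\<lambda>_. strong_op_measure))"
proof (induction j)
  case 0 then show ?case by (simp add: Gp_def)
next
  case (Suc j)
  then have IH: "(\<lambda>p::nat \<Rightarrow> ('h \<Rightarrow>\<^sub>L 'h). rem_prod (\<lambda>i _. p i) j () x) \<in> borel_measurable (PiM {1..n} (\<lambda>_. strong_op_measure))"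
    by (simp add: Gp_def)
  have "(\<lambda>p::nat \<Rightarrow> ('h \<Rightarrow>\<^sub>L 'h). (\<lambda>a v. v - blinfun_apply (a (Suc j)) v) p (rem_prod (\<lambda>i _. p i) j () x)) \<in> borel_measurable (PiM {1..n} (\<lambda>_. strong_op_measure))"
  proof (rule meas_comp_sep[OF sep _ _ IH])
    fix v
    have "(\<lambda>a. a (Suc j)) \<in> measurable (PiM {1..n} (\<lambda>_. strong_op_measure)) strong_op_measure"
      using Suc.prems by (intro measurable_component_singleton) auto
    then have "(\<lambda>a. blinfun_apply (a (Suc j)) v) \<in> borel_measurable (PiM {1..n} (\<lambda>_. strong_op_measure))"
      by (rule measurable_compose) (rule som_eval)
    then show "(\<lambda>a. v - blinfun_apply (a (Suc j)) v) \<in> borel_measurable (PiM {1..n} (\<lambda>_. strong_op_measure))"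
      by (rule borel_measurable_continuous_on[rotated]) (intro continuous_intros)
  next
    fix a :: "nat \<Rightarrow> ('h \<Rightarrow>\<^sub>L 'h)" and v show "isCont (\<lambda>v. v - a (Suc j) v) v" by (intro continuous_intros)
  qed
  then show ?case by (simp add: Gp_def blinfun.diff_left)
qed

lemma Gp_restr: "(\<And>i. i \<in> {1..j} \<Longrightarrow> p i = \<Psi>s i \<omega>) \<Longrightarrow> Gp j x p = rem_prod \<Psi>s j \<omega> x"
  unfolding Gp_def by (intro arg_cong[where f="\<lambda>F. blinfun_apply F x"] rem_prod_cong) auto

lemma PsiM: "\<Psi> \<in> measurable M strong_op_measure"
  using smP by (rule sm_meas)

lemma PsisM: "k \<ge> 1 \<Longrightarrow> \<Psi>s k \<in> measurable M strong_op_measure"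
  using sms by (intro sm_meas) auto

lemma key:
  assumes g[measurable]: "g \<in> borel_measurable (borel \<Otimes>\<^sub>M strong_op_measure)"
  shows "(\<integral>\<^sup>+\<omega>. g (rem_prod \<Psi>s j \<omega> x, \<Psi>s (Suc j) \<omega>) \<partial>M)
       = (\<integral>\<^sup>+\<omega>. (\<integral>\<^sup>+\<omega>'. g (rem_prod \<Psi>s j \<omega> x, \<Psi> \<omega>') \<partial>M) \<partial>M)"
proof -
  define A where "A = PiM {1..j} (\<lambda>_. strong_op_measure :: ('h \<Rightarrow>\<^sub>L 'h) measure)"
  define B where "B = PiM {Suc j} (\<lambda>_. strong_op_measure :: ('h \<Rightarrow>\<^sub>L 'h) measure)"
  define X where "X = (\<lambda>\<omega>. restrict (\<lambda>i. \<Psi>s i \<omega>) {1..j})"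
  define Z where "Z = (\<lambda>\<omega>. restrict (\<lambda>i. \<Psi>s i \<omega>) {Suc j})"
  have iv: "indep_var A X B Z"
    unfolding A_def B_def X_def Z_def by (rule indep_var_restrict[OF ind]) auto
  then have rvX: "random_variable A X" and rvZ: "random_variable B Z"
    and eq: "distr M A X \<Otimes>\<^sub>M distr M B Z = distr M (A \<Otimes>\<^sub>M B) (\<lambda>\<omega>. (X \<omega>, Z \<omega>))"
    unfolding indep_var_distribution_eq by auto
  have GX: "Gp j x (X \<omega>) = rem_prod \<Psi>s j \<omega> x" for \<omega>
    unfolding X_def by (rule Gp_restr) auto
  define G where "G = (\<lambda>(p, q). g (Gp j x p, q (Suc j)))"
  have compB: "(\<lambda>q. q (Suc j)) \<in> measurable B strong_op_measure"
    unfolding B_def by (rule measurable_component_singleton) auto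
  have GpA: "Gp j x \<in> borel_measurable A" unfolding A_def by (rule Gp_meas) simp
  have Gm: "G \<in> borel_measurable (A \<Otimes>\<^sub>M B)"
  proof -
    have "(\<lambda>z. (Gp j x (fst z), snd z (Suc j))) \<in> measurable (A \<Otimes>\<^sub>M B) (borel \<Otimes>\<^sub>M strong_op_measure)"
      by (intro measurable_Pair measurable_compose[OF measurable_fst GpA] measurable_compose[OF measurable_snd compB])
    from measurable_compose[OF this g] show ?thesis unfolding G_def by (simp add: case_prod_beta')
  qed
  have sfZ: "sigma_finite_measure (distr M B Z)"
    using prob_space_distr[OF rvZ] by (simp add: prob_space_imp_sigma_finite)
  have setsP: "sets (distr M A X \<Otimes>\<^sub>M distr M B Z) = sets (A \<Otimes>\<^sub>M B)"
    by (intro sets_pair_measure_cong) auto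
  have Hm: "(\<lambda>y. \<integral>\<^sup>+\<omega>'. g (y, \<Psi> \<omega>') \<partial>M) \<in> borel_measurable borel"
  proof (rule borel_measurable_nn_integral)
    have "(\<lambda>z. (fst z, \<Psi> (snd z))) \<in> measurable (borel \<Otimes>\<^sub>M M) (borel \<Otimes>\<^sub>M strong_op_measure)"
      by (intro measurable_Pair measurable_fst measurable_compose[OF measurable_snd PsiM])
    from measurable_compose[OF this g] show "(\<lambda>(y, \<omega>'). g (y, \<Psi> \<omega>')) \<in> borel_measurable (borel \<Otimes>\<^sub>M M)"
      by (simp add: case_prod_beta')
  qed
  have gP: "(\<lambda>P. g (y, P)) \<in> borel_measurable strong_op_measure" for y
    using measurable_compose[OF measurable_Pair1'[of y borel] g] by simp
  have inner: "(\<integral>\<^sup>+q. G (p, q) \<partial>distr M B Z) = (\<integral>\<^sup>+\<omega>'. g (Gp j x p, \<Psi> \<omega>') \<partial>M)" if p: "p \<in> space A" for p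
  proof -
    have "(\<integral>\<^sup>+q. G (p, q) \<partial>distr M B Z) = (\<integral>\<^sup>+\<omega>. G (p, Z \<omega>) \<partial>M)"
      by (rule nn_integral_distr[OF rvZ]) (simp add: measurable_compose[OF measurable_Pair1'[OF p] Gm])
    also have "\<dots> = (\<integral>\<^sup>+\<omega>. g (Gp j x p, \<Psi>s (Suc j) \<omega>) \<partial>M)"
      unfolding G_def Z_def by simp
    also have "\<dots> = (\<integral>\<^sup>+P. g (Gp j x p, P) \<partial>distr M strong_op_measure (\<Psi>s (Suc j)))"
      by (rule nn_integral_distr[symmetric, OF PsisM]) (simp_all add: gP)
    also have "\<dots> = (\<integral>\<^sup>+P. g (Gp j x p, P) \<partial>distr M strong_op_measure \<Psi>)"
      using dis by simp
    also have "\<dots> = (\<integral>\<^sup>+\<omega>'. g (Gp j x p, \<Psi> \<omega>') \<partial>M)"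
      by (rule nn_integral_distr[OF PsiM]) (simp add: gP)
    finally show ?thesis .
  qed
  have "(\<integral>\<^sup>+\<omega>. g (rem_prod \<Psi>s j \<omega> x, \<Psi>s (Suc j) \<omega>) \<partial>M) = (\<integral>\<^sup>+\<omega>. G (X \<omega>, Z \<omega>) \<partial>M)"
    unfolding G_def using GX by (simp add: Z_def)
  also have "\<dots> = (\<integral>\<^sup>+z. G z \<partial>distr M (A \<Otimes>\<^sub>M B) (\<lambda>\<omega>. (X \<omega>, Z \<omega>)))"
    by (rule nn_integral_distr[symmetric, OF measurable_Pair[OF rvX rvZ]]) (simp add: Gm)
  also have "\<dots> = (\<integral>\<^sup>+z. G z \<partial>(distr M A X \<Otimes>\<^sub>M distr M B Z))"
    by (simp add: eq)
  also have "\<dots> = (\<integral>\<^sup>+p. (\<integral>\<^sup>+q. G (p, q) \<partial>distr M B Z) \<partial>distr M A X)"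
    by (rule sigma_finite_measure.nn_integral_fst[OF sfZ, symmetric])
       (simp add: measurable_cong_sets[OF setsP refl] Gm)
  also have "\<dots> = (\<integral>\<^sup>+p. (\<integral>\<^sup>+\<omega>'. g (Gp j x p, \<Psi> \<omega>') \<partial>M) \<partial>distr M A X)"
    by (rule nn_integral_cong) (simp add: inner)
  also have "\<dots> = (\<integral>\<^sup>+\<omega>. (\<integral>\<^sup>+\<omega>'. g (Gp j x (X \<omega>), \<Psi> \<omega>') \<partial>M) \<partial>M)"
    by (rule nn_integral_distr[OF rvX]) (simp add: measurable_compose[OF GpA Hm])
  also have "\<dots> = (\<integral>\<^sup>+\<omega>. (\<integral>\<^sup>+\<omega>'. g (rem_prod \<Psi>s j \<omega> x, \<Psi> \<omega>') \<partial>M) \<partial>M)"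
    using GX by simp
  finally show ?thesis .
qed

lemma g1m[measurable]: "(\<lambda>z. ennreal ((norm (blinfun_apply (snd z) (fst z)))\<^sup>2)) \<in> borel_measurable (borel \<Otimes>\<^sub>M (strong_op_measure :: ('h \<Rightarrow>\<^sub>L 'h) measure))"
proof -
  have "(\<lambda>z. (\<lambda>z v. (norm (blinfun_apply (snd z) v))\<^sup>2) z (fst z)) \<in> borel_measurable (borel \<Otimes>\<^sub>M (strong_op_measure :: ('h \<Rightarrow>\<^sub>L 'h) measure))"
  proof (rule meas_comp_sep[OF sep, where G="\<lambda>z v. (norm (blinfun_apply (snd z) v))\<^sup>2" and Y=fst])
    fix v :: 'h
    have "(\<lambda>z. blinfun_apply (snd z) v) \<in> borel_measurable (borel \<Otimes>\<^sub>M (strong_op_measure :: ('h \<Rightarrow>\<^sub>L 'h) measure))"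
      by (rule measurable_compose[OF measurable_snd som_eval])
    then show "(\<lambda>z. (norm (blinfun_apply (snd z) v))\<^sup>2) \<in> borel_measurable (borel \<Otimes>\<^sub>M (strong_op_measure :: ('h \<Rightarrow>\<^sub>L 'h) measure))"
      by (rule borel_measurable_continuous_on[rotated]) (intro continuous_intros)
  next
    fix z :: "'h \<times> ('h \<Rightarrow>\<^sub>L 'h)" and v show "isCont (\<lambda>v. (norm (blinfun_apply (snd z) v))\<^sup>2) v"
      by (intro continuous_intros)
  qed (rule measurable_fst)
  then show ?thesis by simp
qed

lemma g2m[measurable]: "(\<lambda>z. ennreal ((norm (fst z - blinfun_apply (snd z) (fst z)))\<^sup>2)) \<in> borel_measurable (borel \<Otimes>\<^sub>M (strong_op_measure :: ('h \<Rightarrow>\<^sub>L 'h) measure))"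
proof -
  have "(\<lambda>z. (\<lambda>z v. (norm (v - blinfun_apply (snd z) v))\<^sup>2) z (fst z)) \<in> borel_measurable (borel \<Otimes>\<^sub>M (strong_op_measure :: ('h \<Rightarrow>\<^sub>L 'h) measure))"
  proof (rule meas_comp_sep[OF sep, where G="\<lambda>z v. (norm (v - blinfun_apply (snd z) v))\<^sup>2" and Y=fst])
    fix v :: 'h
    have "(\<lambda>z. blinfun_apply (snd z) v) \<in> borel_measurable (borel \<Otimes>\<^sub>M (strong_op_measure :: ('h \<Rightarrow>\<^sub>L 'h) measure))"
      by (rule measurable_compose[OF measurable_snd som_eval])
    then show "(\<lambda>z. (norm (v - blinfun_apply (snd z) v))\<^sup>2) \<in> borel_measurable (borel \<Otimes>\<^sub>M (strong_op_measure :: ('h \<Rightarrow>\<^sub>L 'h) measure))"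
      by (rule borel_measurable_continuous_on[rotated]) (intro continuous_intros)
  next
    fix z :: "'h \<times> ('h \<Rightarrow>\<^sub>L 'h)" and v show "isCont (\<lambda>v. (norm (v - blinfun_apply (snd z) v))\<^sup>2) v"
      by (intro continuous_intros)
  qed (rule measurable_fst)
  then show ?thesis by simp
qed

lemma inner_sum: "(\<integral>\<^sup>+\<omega>'. ennreal ((norm (\<Psi> \<omega>' y))\<^sup>2) + ennreal ((norm (y - \<Psi> \<omega>' y))\<^sup>2) \<partial>M) = ennreal ((norm y)\<^sup>2)"
proof -
  have "(\<integral>\<^sup>+\<omega>'. ennreal ((norm (\<Psi> \<omega>' y))\<^sup>2) + ennreal ((norm (y - \<Psi> \<omega>' y))\<^sup>2) \<partial>M)
      = (\<integral>\<^sup>+\<omega>'. ennreal ((norm y)\<^sup>2) \<partial>M)"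
    by (rule nn_integral_cong) (simp add: ennreal_plus[symmetric] proj_pythag proj del: ennreal_plus)
  also have "\<dots> = ennreal ((norm y)\<^sup>2)" by (simp add: emeasure_space_1)
  finally show ?thesis .
qed

lemma Pym: "(\<lambda>\<omega>. \<Psi> \<omega> y) \<in> borel_measurable M"
  using smP unfolding strongly_measurable_def by blast

lemma Pbound: "\<omega> \<in> space M \<Longrightarrow> (norm (\<Psi> \<omega> y))\<^sup>2 \<le> (norm y)\<^sup>2"
  using proj_pythag[of "\<Psi> \<omega>" y] proj by (metis le_add_same_cancel1 zero_le_power2)

lemma inner_bound: "(\<integral>\<^sup>+\<omega>'. ennreal ((norm (y - \<Psi> \<omega>' y))\<^sup>2) \<partial>M) \<le> ennreal ((1 - C) * (norm y)\<^sup>2)"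
proof -
  have pw: "(norm (y - \<Psi> \<omega> y))\<^sup>2 = (norm y)\<^sup>2 - (norm (\<Psi> \<omega> y))\<^sup>2" if "\<omega> \<in> space M" for \<omega>
    using proj_pythag[of "\<Psi> \<omega>" y] proj that by auto
  have m: "(\<lambda>\<omega>. (norm (\<Psi> \<omega> y))\<^sup>2) \<in> borel_measurable M"
    by (rule borel_measurable_continuous_on[OF _ Pym]) (intro continuous_intros)
  have int: "integrable M (\<lambda>\<omega>. (norm (\<Psi> \<omega> y))\<^sup>2)"
  proof (rule integrable_const_bound[where B="(norm y)\<^sup>2"])
    show "AE \<omega> in M. norm ((norm (\<Psi> \<omega> y))\<^sup>2) \<le> (norm y)\<^sup>2"
    proof (rule AE_I2)
      fix \<omega> assume "\<omega> \<in> space M"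
      then show "norm ((norm (\<Psi> \<omega> y))\<^sup>2) \<le> (norm y)\<^sup>2"
      proof -
        have "(norm (\<Psi> \<omega> y))\<^sup>2 \<le> (norm y)\<^sup>2"
          using proj_pythag[of "\<Psi> \<omega>" y] proj \<open>\<omega> \<in> space M\<close>
          by (metis le_add_same_cancel1 zero_le_power2)
        then show ?thesis by simp
      qed
    qed
  qed (rule m)
  have int2: "integrable M (\<lambda>\<omega>. (norm y)\<^sup>2 - (norm (\<Psi> \<omega> y))\<^sup>2)"
    using int by simp
  have "(\<integral>\<^sup>+\<omega>'. ennreal ((norm (y - \<Psi> \<omega>' y))\<^sup>2) \<partial>M) = (\<integral>\<^sup>+\<omega>'. ennreal ((norm y)\<^sup>2 - (norm (\<Psi> \<omega>' y))\<^sup>2) \<partial>M)"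
    by (rule nn_integral_cong) (simp add: pw)
  also have "\<dots> = ennreal (\<integral>\<omega>'. (norm y)\<^sup>2 - (norm (\<Psi> \<omega>' y))\<^sup>2 \<partial>M)"
  proof (rule nn_integral_eq_integral[OF int2], rule AE_I2)
    fix \<omega> assume "\<omega> \<in> space M"
    then show "0 \<le> (norm y)\<^sup>2 - (norm (\<Psi> \<omega> y))\<^sup>2" using Pbound[of \<omega> y] by simp
  qed
  also have "(\<integral>\<omega>'. (norm y)\<^sup>2 - (norm (\<Psi> \<omega>' y))\<^sup>2 \<partial>M) = (norm y)\<^sup>2 - (\<integral>\<omega>'. (norm (\<Psi> \<omega>' y))\<^sup>2 \<partial>M)"
    using int by (simp add: prob_space)
  also have "\<dots> \<le> (1 - C) * (norm y)\<^sup>2" using EC by (simp add: algebra_simps)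
  finally show ?thesis by (simp add: ennreal_leI)
qed

lemma pairm: "(\<lambda>\<omega>. (rem_prod \<Psi>s j \<omega> x, \<Psi>s (Suc j) \<omega>)) \<in> measurable M (borel \<Otimes>\<^sub>M strong_op_measure)"
  by (intro measurable_Pair Rm PsisM) simp

lemma T_eq: "T_op \<Psi>s (Suc j) \<omega> x = \<Psi>s (Suc j) \<omega> (rem_prod \<Psi>s j \<omega> x)"
  by simp

lemma R_eq: "rem_prod \<Psi>s (Suc j) \<omega> x = rem_prod \<Psi>s j \<omega> x - \<Psi>s (Suc j) \<omega> (rem_prod \<Psi>s j \<omega> x)"
  by (simp add: blinfun.diff_left)

lemma step1:
  "(\<integral>\<^sup>+\<omega>. ennreal ((norm (T_op \<Psi>s (Suc j) \<omega> x))\<^sup>2) \<partial>M) + (\<integral>\<^sup>+\<omega>. ennreal ((norm (rem_prod \<Psi>s (Suc j) \<omega> x))\<^sup>2) \<partial>M)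
   = (\<integral>\<^sup>+\<omega>. ennreal ((norm (rem_prod \<Psi>s j \<omega> x))\<^sup>2) \<partial>M)"
proof -
  define g1 where "g1 = (\<lambda>z::'h \<times> ('h \<Rightarrow>\<^sub>L 'h). ennreal ((norm (blinfun_apply (snd z) (fst z)))\<^sup>2))"
  define g2 where "g2 = (\<lambda>z::'h \<times> ('h \<Rightarrow>\<^sub>L 'h). ennreal ((norm (fst z - blinfun_apply (snd z) (fst z)))\<^sup>2))"
  have g1m': "g1 \<in> borel_measurable (borel \<Otimes>\<^sub>M strong_op_measure)" unfolding g1_def by (rule g1m)
  have g2m': "g2 \<in> borel_measurable (borel \<Otimes>\<^sub>M strong_op_measure)" unfolding g2_def by (rule g2m)
  have gm: "(\<lambda>z. g1 z + g2 z) \<in> borel_measurable (borel \<Otimes>\<^sub>M strong_op_measure)"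
    using g1m' g2m' by measurable
  have "(\<integral>\<^sup>+\<omega>. ennreal ((norm (T_op \<Psi>s (Suc j) \<omega> x))\<^sup>2) \<partial>M) + (\<integral>\<^sup>+\<omega>. ennreal ((norm (rem_prod \<Psi>s (Suc j) \<omega> x))\<^sup>2) \<partial>M)
      = (\<integral>\<^sup>+\<omega>. g1 (rem_prod \<Psi>s j \<omega> x, \<Psi>s (Suc j) \<omega>) \<partial>M) + (\<integral>\<^sup>+\<omega>. g2 (rem_prod \<Psi>s j \<omega> x, \<Psi>s (Suc j) \<omega>) \<partial>M)"
    unfolding g1_def g2_def by (simp only: T_eq R_eq fst_conv snd_conv)
  also have "\<dots> = (\<integral>\<^sup>+\<omega>. (\<lambda>z. g1 z + g2 z) (rem_prod \<Psi>s j \<omega> x, \<Psi>s (Suc j) \<omega>) \<partial>M)"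
    by (rule nn_integral_add[symmetric]) (intro measurable_compose[OF pairm] g1m' g2m')+
  also have "\<dots> = (\<integral>\<^sup>+\<omega>. (\<integral>\<^sup>+\<omega>'. (\<lambda>z. g1 z + g2 z) (rem_prod \<Psi>s j \<omega> x, \<Psi> \<omega>') \<partial>M) \<partial>M)"
    by (rule key[OF gm])
  also have "\<dots> = (\<integral>\<^sup>+\<omega>. ennreal ((norm (rem_prod \<Psi>s j \<omega> x))\<^sup>2) \<partial>M)"
    unfolding g1_def g2_def by (simp add: inner_sum)
  finally show ?thesis .
qed

lemma step2:
  "(\<integral>\<^sup>+\<omega>. ennreal ((norm (rem_prod \<Psi>s (Suc j) \<omega> x))\<^sup>2) \<partial>M)
   \<le> ennreal (1 - C) * (\<integral>\<^sup>+\<omega>. ennreal ((norm (rem_prod \<Psi>s j \<omega> x))\<^sup>2) \<partial>M)"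
proof -
  define g2 where "g2 = (\<lambda>z::'h \<times> ('h \<Rightarrow>\<^sub>L 'h). ennreal ((norm (fst z - blinfun_apply (snd z) (fst z)))\<^sup>2))"
  have g2m': "g2 \<in> borel_measurable (borel \<Otimes>\<^sub>M strong_op_measure)" unfolding g2_def by (rule g2m)
  have "(\<integral>\<^sup>+\<omega>. ennreal ((norm (rem_prod \<Psi>s (Suc j) \<omega> x))\<^sup>2) \<partial>M)
      = (\<integral>\<^sup>+\<omega>. g2 (rem_prod \<Psi>s j \<omega> x, \<Psi>s (Suc j) \<omega>) \<partial>M)"
    unfolding g2_def by (simp only: R_eq fst_conv snd_conv)
  also have "\<dots> = (\<integral>\<^sup>+\<omega>. (\<integral>\<^sup>+\<omega>'. g2 (rem_prod \<Psi>s j \<omega> x, \<Psi> \<omega>') \<partial>M) \<partial>M)"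
    by (rule key[OF g2m'])
  also have "\<dots> \<le> (\<integral>\<^sup>+\<omega>. ennreal (1 - C) * ennreal ((norm (rem_prod \<Psi>s j \<omega> x))\<^sup>2) \<partial>M)"
  proof (rule nn_integral_mono)
    fix \<omega>
    have "(\<integral>\<^sup>+\<omega>'. g2 (rem_prod \<Psi>s j \<omega> x, \<Psi> \<omega>') \<partial>M) \<le> ennreal ((1 - C) * (norm (rem_prod \<Psi>s j \<omega> x))\<^sup>2)"
      unfolding g2_def using inner_bound by simp
    also have "\<dots> = ennreal (1 - C) * ennreal ((norm (rem_prod \<Psi>s j \<omega> x))\<^sup>2)"
      using C1 by (simp add: ennreal_mult)
    finally show "(\<integral>\<^sup>+\<omega>'. g2 (rem_prod \<Psi>s j \<omega> x, \<Psi> \<omega>') \<partial>M) \<le> ennreal (1 - C) * ennreal ((norm (rem_prod \<Psi>s j \<omega> x))\<^sup>2)" .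
  qed
  also have "\<dots> = ennreal (1 - C) * (\<integral>\<^sup>+\<omega>. ennreal ((norm (rem_prod \<Psi>s j \<omega> x))\<^sup>2) \<partial>M)"
    by (rule nn_integral_cmult) (rule measurable_compose[OF Rm], measurable)
  finally show ?thesis .
qed

lemma abound: "(\<integral>\<^sup>+\<omega>. ennreal ((norm (rem_prod \<Psi>s j \<omega> x))\<^sup>2) \<partial>M) \<le> ennreal ((1 - C) ^ j * (norm x)\<^sup>2)"
proof (induction j)
  case 0 then show ?case by (simp add: emeasure_space_1)
next
  case (Suc j)
  have "(\<integral>\<^sup>+\<omega>. ennreal ((norm (rem_prod \<Psi>s (Suc j) \<omega> x))\<^sup>2) \<partial>M)
       \<le> ennreal (1 - C) * (\<integral>\<^sup>+\<omega>. ennreal ((norm (rem_prod \<Psi>s j \<omega> x))\<^sup>2) \<partial>M)" by (rule step2)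
  also have "\<dots> \<le> ennreal (1 - C) * ennreal ((1 - C) ^ j * (norm x)\<^sup>2)"
    by (rule mult_left_mono[OF Suc]) simp
  also have "\<dots> = ennreal ((1 - C) ^ Suc j * (norm x)\<^sup>2)"
    using C1 by (simp add: ennreal_mult[symmetric] mult.assoc)
  finally show ?case .
qed

lemma Rsqm: "(\<lambda>\<omega>. (norm (rem_prod \<Psi>s j \<omega> x))\<^sup>2) \<in> borel_measurable M"
  by (rule borel_measurable_continuous_on[OF _ Rm]) (intro continuous_intros)

lemma Tsqm: "(\<lambda>\<omega>. (norm (T_op \<Psi>s (Suc j) \<omega> x))\<^sup>2) \<in> borel_measurable M"
proof -
  have "(\<lambda>\<omega>. (\<lambda>\<omega> v. (norm (\<Psi>s (Suc j) \<omega> v))\<^sup>2) \<omega> (rem_prod \<Psi>s j \<omega> x)) \<in> borel_measurable M"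
  proof (rule meas_comp_sep[OF sep, where G="\<lambda>\<omega> v. (norm (\<Psi>s (Suc j) \<omega> v))\<^sup>2", OF _ _ Rm])
    fix v
    have "(\<lambda>a. \<Psi>s (Suc j) a v) \<in> borel_measurable M" using sms unfolding strongly_measurable_def by auto
    then show "(\<lambda>a. (norm (\<Psi>s (Suc j) a v))\<^sup>2) \<in> borel_measurable M"
      by (rule borel_measurable_continuous_on[rotated]) (intro continuous_intros)
  next
    fix a v show "isCont (\<lambda>v. (norm (\<Psi>s (Suc j) a v))\<^sup>2) v" by (intro continuous_intros)
  qed
  then show ?thesis by simp
qed

lemma intR: "integrable M (\<lambda>\<omega>. (norm (rem_prod \<Psi>s j \<omega> x))\<^sup>2)"
proof (rule integrableI_nonneg[OF Rsqm])
  show "(\<integral>\<^sup>+\<omega>. ennreal ((norm (rem_prod \<Psi>s j \<omega> x))\<^sup>2) \<partial>M) < \<infinity>"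
    using abound[of j x] by (simp add: le_less_trans)
qed simp

lemma intT: "integrable M (\<lambda>\<omega>. (norm (T_op \<Psi>s (Suc j) \<omega> x))\<^sup>2)"
proof (rule integrableI_nonneg[OF Tsqm])
  have "(\<integral>\<^sup>+\<omega>. ennreal ((norm (T_op \<Psi>s (Suc j) \<omega> x))\<^sup>2) \<partial>M) \<le> (\<integral>\<^sup>+\<omega>. ennreal ((norm (rem_prod \<Psi>s j \<omega> x))\<^sup>2) \<partial>M)"
    using step1[of j x] by (metis le_iff_add)
  also have "\<dots> < \<infinity>" using abound[of j x] by (simp add: le_less_trans)
  finally show "(\<integral>\<^sup>+\<omega>. ennreal ((norm (T_op \<Psi>s (Suc j) \<omega> x))\<^sup>2) \<partial>M) < \<infinity>" .
qed simp

lemma realstep: "(\<integral>\<omega>. (norm (T_op \<Psi>s (Suc j) \<omega> x))\<^sup>2 \<partial>M) + (\<integral>\<omega>. (norm (rem_prod \<Psi>s (Suc j) \<omega> x))\<^sup>2 \<partial>M)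
   = (\<integral>\<omega>. (norm (rem_prod \<Psi>s j \<omega> x))\<^sup>2 \<partial>M)"
proof -
  have e1: "(\<integral>\<^sup>+\<omega>. ennreal ((norm (T_op \<Psi>s (Suc j) \<omega> x))\<^sup>2) \<partial>M) = ennreal (\<integral>\<omega>. (norm (T_op \<Psi>s (Suc j) \<omega> x))\<^sup>2 \<partial>M)"
    by (rule nn_integral_eq_integral[OF intT]) simp
  have e2: "(\<integral>\<^sup>+\<omega>. ennreal ((norm (rem_prod \<Psi>s j' \<omega> x))\<^sup>2) \<partial>M) = ennreal (\<integral>\<omega>. (norm (rem_prod \<Psi>s j' \<omega> x))\<^sup>2 \<partial>M)" for j'
    by (rule nn_integral_eq_integral[OF intR]) simp
  have n1: "0 \<le> (\<integral>\<omega>. (norm (T_op \<Psi>s (Suc j) \<omega> x))\<^sup>2 \<partial>M)" by simp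
  have n2: "0 \<le> (\<integral>\<omega>. (norm (rem_prod \<Psi>s j' \<omega> x))\<^sup>2 \<partial>M)" for j' by simp
  have eq: "ennreal ((\<integral>\<omega>. (norm (T_op \<Psi>s (Suc j) \<omega> x))\<^sup>2 \<partial>M) + (\<integral>\<omega>. (norm (rem_prod \<Psi>s (Suc j) \<omega> x))\<^sup>2 \<partial>M))
     = ennreal (\<integral>\<omega>. (norm (rem_prod \<Psi>s j \<omega> x))\<^sup>2 \<partial>M)"
    using step1[of j x] unfolding e1 e2 by (simp only: ennreal_plus[OF n1 n2])
  from arg_cong[OF eq, of enn2real] show ?thesis
    using n1 n2[of j] n2[of "Suc j"] by (simp only: enn2real_ennreal add_nonneg_nonneg)
qed

lemma Rbound: "(\<integral>\<omega>. (norm (rem_prod \<Psi>s j \<omega> x))\<^sup>2 \<partial>M) \<le> (1 - C) ^ j * (norm x)\<^sup>2"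
proof -
  have "ennreal (\<integral>\<omega>. (norm (rem_prod \<Psi>s j \<omega> x))\<^sup>2 \<partial>M) \<le> ennreal ((1 - C) ^ j * (norm x)\<^sup>2)"
    using abound[of j x] nn_integral_eq_integral[OF intR[of j x]] by simp
  moreover have "0 \<le> (1 - C) ^ j * (norm x)\<^sup>2" using C1 by simp
  ultimately show ?thesis by (simp add: ennreal_le_iff)
qed

lemma tele: "x - (\<Sum>k=1..n. T_op \<Psi>s k \<omega> x) = rem_prod \<Psi>s n \<omega> x"
proof (induction n)
  case 0 then show ?case by simp
next
  case (Suc n)
  have "x - (\<Sum>k=1..Suc n. T_op \<Psi>s k \<omega> x) = (x - (\<Sum>k=1..n. T_op \<Psi>s k \<omega> x)) - T_op \<Psi>s (Suc n) \<omega> x"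
    by simp
  also have "\<dots> = rem_prod \<Psi>s (Suc n) \<omega> x" using Suc by (simp only: T_eq R_eq)
  finally show ?case .
qed

lemma sumT: "(\<integral>\<omega>. (\<Sum>k=1..n. (norm (T_op \<Psi>s k \<omega> x))\<^sup>2) \<partial>M) = (norm x)\<^sup>2 - (\<integral>\<omega>. (norm (rem_prod \<Psi>s n \<omega> x))\<^sup>2 \<partial>M)"
proof -
  have "(\<integral>\<omega>. (\<Sum>k=1..n. (norm (T_op \<Psi>s k \<omega> x))\<^sup>2) \<partial>M) = (\<Sum>k=1..n. (\<integral>\<omega>. (norm (T_op \<Psi>s k \<omega> x))\<^sup>2 \<partial>M))"
  proof (rule Bochner_Integration.integral_sum[where f="\<lambda>k \<omega>. (norm (T_op \<Psi>s k \<omega> x))\<^sup>2"])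
    fix k assume "k \<in> {1..n}"
    then obtain j where "k = Suc j" by (cases k) auto
    then show "integrable M (\<lambda>\<omega>. (norm (T_op \<Psi>s k \<omega> x))\<^sup>2)" using intT by simp
  qed
  also have "\<dots> = (norm x)\<^sup>2 - (\<integral>\<omega>. (norm (rem_prod \<Psi>s n \<omega> x))\<^sup>2 \<partial>M)"
  proof (induction n)
    case 0 then show ?case by (simp add: prob_space)
  next
    case (Suc n)
    then show ?case using realstep[of n x] by simp
  qed
  finally show ?thesis .
qed

lemma lim1: "(\<lambda>n. \<integral>\<omega>. (norm (rem_prod \<Psi>s n \<omega> x))\<^sup>2 \<partial>M) \<longlonglongrightarrow> 0"
proof (rule tendsto_sandwich[OF _ _ tendsto_const])
  have "norm (1 - C) < 1" using C0 C1 by simp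
  then have "(\<lambda>n. (1 - C) ^ n) \<longlonglongrightarrow> 0" by (rule LIMSEQ_power_zero)
  then show "(\<lambda>n. (1 - C) ^ n * (norm x)\<^sup>2) \<longlonglongrightarrow> 0"
    using tendsto_mult[OF _ tendsto_const, of "\<lambda>n. (1 - C) ^ n" 0 sequentially "(norm x)\<^sup>2"] by simp
  show "\<forall>\<^sub>F n in sequentially. (\<integral>\<omega>. (norm (rem_prod \<Psi>s n \<omega> x))\<^sup>2 \<partial>M) \<le> (1 - C) ^ n * (norm x)\<^sup>2"
    using Rbound by (intro always_eventually) auto
qed simp

lemma ae_lim: "AE \<omega> in M. (\<lambda>n. rem_prod \<Psi>s n \<omega> x) \<longlonglongrightarrow> 0"
proof -
  have m: "(\<lambda>\<omega>. ennreal ((norm (rem_prod \<Psi>s n \<omega> x))\<^sup>2)) \<in> borel_measurable M" for n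
    using Rsqm[of n x] by measurable
  have sg: "summable (\<lambda>n. (1 - C) ^ n * (norm x)\<^sup>2)"
    using C0 C1 by (intro summable_mult2 summable_geometric) simp
  have "(\<integral>\<^sup>+\<omega>. (\<Sum>n. ennreal ((norm (rem_prod \<Psi>s n \<omega> x))\<^sup>2)) \<partial>M)
      = (\<Sum>n. \<integral>\<^sup>+\<omega>. ennreal ((norm (rem_prod \<Psi>s n \<omega> x))\<^sup>2) \<partial>M)"
    by (rule nn_integral_suminf) (rule m)
  also have "\<dots> \<le> (\<Sum>n. ennreal ((1 - C) ^ n * (norm x)\<^sup>2))"
    by (intro suminf_le abound) auto
  also have "\<dots> = ennreal (\<Sum>n. (1 - C) ^ n * (norm x)\<^sup>2)"
    using C1 sg by (intro suminf_ennreal2) auto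
  also have "\<dots> < \<infinity>" by simp
  finally have "(\<integral>\<^sup>+\<omega>. (\<Sum>n. ennreal ((norm (rem_prod \<Psi>s n \<omega> x))\<^sup>2)) \<partial>M) \<noteq> \<infinity>" by simp
  then have "AE \<omega> in M. (\<Sum>n. ennreal ((norm (rem_prod \<Psi>s n \<omega> x))\<^sup>2)) \<noteq> \<infinity>"
    by (intro nn_integral_PInf_AE) (use m in measurable)
  then show ?thesis
  proof (rule AE_mp, intro AE_I2 impI)
    fix \<omega> assume "(\<Sum>n. ennreal ((norm (rem_prod \<Psi>s n \<omega> x))\<^sup>2)) \<noteq> \<infinity>"
    then have "summable (\<lambda>n. (norm (rem_prod \<Psi>s n \<omega> x))\<^sup>2)"
      by (intro summable_suminf_not_top) auto
    then have "(\<lambda>n. (norm (rem_prod \<Psi>s n \<omega> x))\<^sup>2) \<longlonglongrightarrow> 0" by (rule summable_LIMSEQ_zero)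
    then have "(\<lambda>n. sqrt ((norm (rem_prod \<Psi>s n \<omega> x))\<^sup>2)) \<longlonglongrightarrow> sqrt 0" by (rule tendsto_real_sqrt)
    then have "(\<lambda>n. norm (rem_prod \<Psi>s n \<omega> x)) \<longlonglongrightarrow> 0" by simp
    then show "(\<lambda>n. rem_prod \<Psi>s n \<omega> x) \<longlonglongrightarrow> 0" by (simp only: tendsto_norm_zero_iff)
  qed
qed

end

theorem mainTheorem5:
  fixes M :: "'w measure"
    and \<Psi> :: "'w \<Rightarrow> ('h::{real_inner, complete_space} \<Rightarrow>\<^sub>L 'h)"
    and \<Psi>s :: "nat \<Rightarrow> 'w \<Rightarrow> ('h \<Rightarrow>\<^sub>L 'h)"
    and C :: real
  assumes "prob_space M"
    and "separable_space TYPE('h)"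
    and "strongly_measurable M \<Psi>"
    and "\<forall>\<omega>\<in>space M. is_orth_proj (\<Psi> \<omega>)"
    and "0 < C" and "C < 1"
    and "\<forall>x. (\<integral>\<omega>. (norm (\<Psi> \<omega> x))\<^sup>2 \<partial>M) \<ge> C * (norm x)\<^sup>2"
    and "\<forall>k\<ge>1. strongly_measurable M (\<Psi>s k)"
    and "prob_space.indep_vars M (\<lambda>_. strong_op_measure) \<Psi>s {1..}"
    and "\<forall>k\<ge>1. distr M strong_op_measure (\<Psi>s k) = distr M strong_op_measure \<Psi>"
  shows "\<forall>x. ((\<lambda>n. \<integral>\<omega>. (norm (x - (\<Sum>k=1..n. T_op \<Psi>s k \<omega> x)))\<^sup>2 \<partial>M) \<longlonglongrightarrow> 0)
           \<and> (AE \<omega> in M. (\<lambda>n. \<Sum>k=1..n. T_op \<Psi>s k \<omega> x) \<longlonglongrightarrow> x)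
           \<and> ((\<lambda>n. \<integral>\<omega>. (\<Sum>k=1..n. (norm (T_op \<Psi>s k \<omega> x))\<^sup>2) \<partial>M) \<longlonglongrightarrow> (norm x)\<^sup>2)"
proof -
  interpret rsetting M \<Psi> \<Psi>s C
    using assms unfolding rsetting_def rsetting_axioms_def by auto
  show ?thesis
  proof (intro allI conjI)
    fix x :: 'h
    show "(\<lambda>n. \<integral>\<omega>. (norm (x - (\<Sum>k=1..n. T_op \<Psi>s k \<omega> x)))\<^sup>2 \<partial>M) \<longlonglongrightarrow> 0"
      unfolding tele by (rule lim1)
    show "AE \<omega> in M. (\<lambda>n. \<Sum>k=1..n. T_op \<Psi>s k \<omega> x) \<longlonglongrightarrow> x"
    proof (rule AE_mp[OF ae_lim[of x]], intro AE_I2 impI)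
      fix \<omega> assume "(\<lambda>n. rem_prod \<Psi>s n \<omega> x) \<longlonglongrightarrow> 0"
      then have "(\<lambda>n. x - rem_prod \<Psi>s n \<omega> x) \<longlonglongrightarrow> x - 0" by (intro tendsto_diff tendsto_const)
      moreover have "x - rem_prod \<Psi>s n \<omega> x = (\<Sum>k=1..n. T_op \<Psi>s k \<omega> x)" for n
        by (subst tele[symmetric]) simp
      ultimately show "(\<lambda>n. \<Sum>k=1..n. T_op \<Psi>s k \<omega> x) \<longlonglongrightarrow> x" by simp
    qed
    have "(\<lambda>n. (norm x)\<^sup>2 - (\<integral>\<omega>. (norm (rem_prod \<Psi>s n \<omega> x))\<^sup>2 \<partial>M)) \<longlonglongrightarrow> (norm x)\<^sup>2 - 0"
      by (intro tendsto_diff tendsto_const lim1)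
    then show "(\<lambda>n. \<integral>\<omega>. (\<Sum>k=1..n. (norm (T_op \<Psi>s k \<omega> x))\<^sup>2) \<partial>M) \<longlonglongrightarrow> (norm x)\<^sup>2"
      unfolding sumT by simp
  qed
qed

end
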